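(* Let $m\ge1$ and $0\le r\le m(q-1)$, written $r=t(q-1)+s$ with $t\ge0$, $0\le s<q-1$, and let $1\le b\le q^m$. Then $RM_q(r,m)$ is a $b$-symbol MDS code if and only if either (a) $b\ge q^m-(q-s)q^{m-t-1}+1$, or (b) $RM_q(r,m)$ is a $1$-symbol MDS code (i.e., MDS in the Hamming metric).
   Context: Fix an enumeration $\mathbb{F}_q=\{\alpha_1=0,\alpha_2,\dots,\alpha_q\}$, order $\mathbb{F}_q$ by $\alpha_1<\dots<\alpha_q$, and order $\mathbb{F}_q^m$ lexicographically as $P_1<\dots<P_{q^m}$. $RM_q(r,m)=\{(f(P_1),\dots,f(P_{q^m})) : f\in\mathbb{F}_q[X_1,\dots,X_m],\ \deg f\le r\}$. For $\mathbf{x}\in\mathbb{F}_q^L$, $\chi_b(\mathbf{x})=\{i:(x_i,\dots,x_{i+b-1})\ne\mathbf{0}\}$ (indices mod $L$), $w_b(\mathbf{x})=|\chi_b(\mathbf{x})|$, $d_b(C)=\min_{\mathbf{0}\ne\mathbf{c}\in C}w_b(\mathbf{c})$. An $[n,k]_q$-linear code $C$ is a $b$-symbol MDS code if $d_b(C)=\min\{n-k+b,n\}$. *)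

theory Defs
  imports "HOL-Analysis.Analysis" "HOL-Library.Function_Algebras"
begin

text \<open>Vectors of length L over a field are functions nat => 'a (coordinates 0..L-1,
  zero outside). Scalar multiplication for the F_q-vector space of such functions.\<close>
definition fscale :: "'a::field \<Rightarrow> (nat \<Rightarrow> 'a) \<Rightarrow> (nat \<Rightarrow> 'a)" where
  "fscale c x = (\<lambda>i. c * x i)"

definition code_dim :: "(nat \<Rightarrow> 'a::field) set \<Rightarrow> nat" where
  "code_dim C = vector_space.dim fscale C"

definition chi_b :: "nat \<Rightarrow> nat \<Rightarrow> (nat \<Rightarrow> 'a::zero) \<Rightarrow> nat set" where
  "chi_b b L x = {i. i < L \<and> (\<exists>j<b. x ((i + j) mod L) \<noteq> 0)}"

definition w_b :: "nat \<Rightarrow> nat \<Rightarrow> (nat \<Rightarrow> 'a::zero) \<Rightarrow> nat" where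
  "w_b b L x = card (chi_b b L x)"

definition d_b :: "nat \<Rightarrow> nat \<Rightarrow> (nat \<Rightarrow> 'a::zero) set \<Rightarrow> nat" where
  "d_b b L C = Min {w_b b L c | c. c \<in> C \<and> (\<exists>i<L. c i \<noteq> 0)}"

definition b_symbol_MDS :: "nat \<Rightarrow> nat \<Rightarrow> (nat \<Rightarrow> 'a::field) set \<Rightarrow> bool" where
  "b_symbol_MDS b L C \<longleftrightarrow> d_b b L C = min (L - code_dim C + b) L"

definition exps :: "nat \<Rightarrow> nat \<Rightarrow> (nat \<Rightarrow> nat) set" where
  "exps m r = {e. (\<forall>i\<ge>m. e i = 0) \<and> (\<Sum>i<m. e i) \<le> r}"

definition peval :: "nat \<Rightarrow> nat \<Rightarrow> ((nat \<Rightarrow> nat) \<Rightarrow> 'a::comm_ring_1) \<Rightarrow> (nat \<Rightarrow> 'a) \<Rightarrow> 'a" where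
  "peval m r c x = (\<Sum>e\<in>exps m r. c e * (\<Prod>i<m. x i ^ e i))"

text \<open>The j-th point (0-based) of F_q^m in lexicographic order induced by the enumeration
  alpha of F_q (alpha 0 < alpha 1 < ... < alpha (q-1)); coordinate 0 is most significant.\<close>
definition lex_point :: "(nat \<Rightarrow> 'a::zero) \<Rightarrow> nat \<Rightarrow> nat \<Rightarrow> nat \<Rightarrow> nat \<Rightarrow> 'a" where
  "lex_point alpha q m j i = (if i < m then alpha ((j div q ^ (m - 1 - i)) mod q) else 0)"

definition RM :: "(nat \<Rightarrow> 'a::{field,finite}) \<Rightarrow> nat \<Rightarrow> nat \<Rightarrow> (nat \<Rightarrow> 'a) set" where
  "RM alpha r m = {(\<lambda>j. if j < CARD('a) ^ m
                        then peval m r c (lex_point alpha CARD('a) m j) else 0) | c. True}"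

end

theory Submission
  imports Defs "HOL-Computational_Algebra.Polynomial"
begin

lemma vs_fscale: "vector_space (fscale :: 'a::field \<Rightarrow> (nat \<Rightarrow> 'a) \<Rightarrow> _)"
  by unfold_locales (auto simp: fscale_def fun_eq_iff algebra_simps)

interpretation fs: vector_space "fscale :: 'a::field \<Rightarrow> (nat \<Rightarrow> 'a) \<Rightarrow> _"
  by (rule vs_fscale)

lemma code_dim_alt: "code_dim C = fs.dim C"
  by (simp add: code_dim_def)

definition restr :: "nat set \<Rightarrow> (nat \<Rightarrow> 'a::zero) \<Rightarrow> (nat \<Rightarrow> 'a)" where
  "restr S x = (\<lambda>i. if i \<in> S then x i else 0)"

lemma restr_hom: "module_hom (fscale :: 'a::field \<Rightarrow> (nat \<Rightarrow> 'a) \<Rightarrow> _) fscale (restr S)"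
  apply (rule module_hom.intro)
    apply (rule fs.module_axioms)+
  by unfold_locales (auto simp: restr_def fscale_def fun_eq_iff)


lemma sum_fun_apply: "(\<Sum>i\<in>S. f i) j = (\<Sum>i\<in>S. f i j)"
  by (induction S rule: infinite_finite_induct) auto

lemma dim_le_restr:
  fixes C :: "(nat \<Rightarrow> 'a::field) set"
  assumes sub: "fs.subspace C" and fin: "finite S"
    and inj: "\<And>c. c \<in> C \<Longrightarrow> (\<forall>i\<in>S. c i = 0) \<Longrightarrow> c = 0"
  shows "fs.dim C \<le> card S"
proof -
  obtain B where B: "B \<subseteq> C" "fs.independent B" "C \<subseteq> fs.span B" "card B = fs.dim C"
    by (rule fs.basis_exists)
  have spB: "fs.span B = C" using B sub by (simp add: fs.span_subspace)
  have injC: "inj_on (restr S) (fs.span B)"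
  proof (rule inj_onI)
    fix x y assume xy: "x \<in> fs.span B" "y \<in> fs.span B" "restr S x = restr S y"
    have "x - y \<in> C" using xy spB sub by (metis fs.subspace_diff)
    moreover have "\<forall>i\<in>S. (x - y) i = 0" using xy(3) by (auto simp: restr_def fun_eq_iff) metis
    ultimately have "x - y = 0" by (rule inj)
    thus "x = y" by simp
  qed
  have ind: "fs.independent (restr S ` B)"
    by (rule module_hom.independent_injective_image[OF restr_hom B(2) injC])
  define D where "D = (\<lambda>i::nat. (\<lambda>j. if j = i then (1::'a) else 0)) ` S"
  have "restr S ` B \<subseteq> fs.span D"
  proof
    fix z assume "z \<in> restr S ` B"
    then obtain x where z: "z = restr S x" by auto
    have "z = (\<Sum>i\<in>S. fscale (x i) (\<lambda>j. if j = i then 1 else 0))"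
      using fin by (auto simp: z restr_def fscale_def fun_eq_iff sum_fun_apply if_distrib cong: if_cong)
    also have "\<dots> \<in> fs.span D"
      by (intro fs.span_sum fs.span_scale fs.span_base) (auto simp: D_def)
    finally show "z \<in> fs.span D" .
  qed
  hence "card (restr S ` B) \<le> card D"
    using fs.independent_span_bound[OF _ ind] fin by (auto simp: D_def)
  also have "card D \<le> card S" unfolding D_def by (rule card_image_le[OF fin])
  finally show ?thesis
    using B(4) card_image[OF inj_on_subset[OF injC fs.span_superset]] by simp
qed

definition inP :: "nat \<Rightarrow> nat \<Rightarrow> ((nat \<Rightarrow> 'a::comm_ring_1) \<Rightarrow> 'a) \<Rightarrow> bool" where
  "inP m r f \<longleftrightarrow> (\<exists>c. \<forall>x. f x = peval m r c x)"

lemma finite_exps: "finite (exps m r)"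
proof -
  have "exps m r \<subseteq> {f. \<forall>x. (x \<in> {..<m} \<longrightarrow> f x \<in> {..r}) \<and> (x \<notin> {..<m} \<longrightarrow> f x = 0)}"
  proof
    fix e assume e: "e \<in> exps m r"
    { fix x assume "x < m"
      hence "e x \<le> (\<Sum>i<m. e i)" by (intro member_le_sum) auto
      hence "e x \<le> r" using e by (auto simp: exps_def) }
    thus "e \<in> {f. \<forall>x. (x \<in> {..<m} \<longrightarrow> f x \<in> {..r}) \<and> (x \<notin> {..<m} \<longrightarrow> f x = 0)}"
      using e by (auto simp: exps_def)
  qed
  thus ?thesis by (rule finite_subset) (rule finite_set_of_finite_funs; simp)
qed

lemma sum_delta_mult:
  assumes "finite E" "z \<in> E"
  shows "(\<Sum>e\<in>E. (if e = z then a else 0) * M e) = (a::'a::comm_ring_1) * M z"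
proof -
  have "(\<Sum>e\<in>E. (if e = z then a else 0) * M e) = (\<Sum>e\<in>E. if e = z then a * M e else 0)"
    by (rule sum.cong) auto
  also have "\<dots> = a * M z" using assms by simp
  finally show ?thesis .
qed

lemma inP_add: "inP m r f \<Longrightarrow> inP m r g \<Longrightarrow> inP m r (\<lambda>x. f x + g x)"
proof -
  assume "inP m r f" "inP m r g"
  then obtain c1 c2 where c: "\<And>x. f x = peval m r c1 x" "\<And>x. g x = peval m r c2 x"
    unfolding inP_def by blast
  show ?thesis unfolding inP_def
    by (rule exI[of _ "\<lambda>e. c1 e + c2 e"]) (simp add: c peval_def distrib_right sum.distrib)
qed

lemma inP_zero: "inP m r (\<lambda>x. 0)"
  unfolding inP_def peval_def by (rule exI[of _ "\<lambda>_. 0"]) simp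

lemma inP_sum: "finite I \<Longrightarrow> (\<And>i. i \<in> I \<Longrightarrow> inP m r (f i)) \<Longrightarrow> inP m r (\<lambda>x. \<Sum>i\<in>I. f i x)"
  by (induction I rule: finite_induct) (auto intro: inP_add inP_zero)

lemma inP_mono:
  assumes "inP m r f" "r \<le> r'" shows "inP m r' f"
proof -
  obtain c where c: "\<And>x. f x = peval m r c x" using assms unfolding inP_def by auto
  have sub: "exps m r \<subseteq> exps m r'" using assms(2) by (auto simp: exps_def)
  show ?thesis unfolding inP_def
  proof (intro exI allI)
    fix x
    show "f x = peval m r' (\<lambda>e. if e \<in> exps m r then c e else 0) x"
      unfolding c peval_def
      by (rule sum.mono_neutral_cong_left[OF finite_exps sub]) simp_all
  qed
qed

lemma inP_const: "inP m r (\<lambda>x. a)"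
proof -
  have z: "(\<lambda>_. 0::nat) \<in> exps m r" by (auto simp: exps_def)
  show ?thesis unfolding inP_def peval_def
    by (rule exI[of _ "\<lambda>e. if e = (\<lambda>_. 0) then a else 0"]) (simp add: sum_delta_mult[OF finite_exps z])
qed

lemma inP_var: assumes "i < m" shows "inP m 1 (\<lambda>x. x i)"
proof -
  define ei where "ei = (\<lambda>j. if j = i then 1 else 0::nat)"
  have z: "ei \<in> exps m 1" using assms by (auto simp: exps_def ei_def)
  have "(\<Prod>j<m. x j ^ ei j) = x i" for x :: "nat \<Rightarrow> 'a"
  proof -
    have "(\<Prod>j<m. x j ^ ei j) = (\<Prod>j<m. if j = i then x j else 1)"
      by (rule prod.cong) (auto simp: ei_def)
    also have "\<dots> = x i" using assms by (simp add: prod.delta)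
    finally show ?thesis .
  qed
  thus ?thesis unfolding inP_def peval_def
    by (intro exI[of _ "\<lambda>e. if e = ei then 1 else 0"]) (simp only: sum_delta_mult[OF finite_exps z], simp)
qed

lemma inP_mult:
  assumes "inP m r1 f" "inP m r2 g" shows "inP m (r1 + r2) (\<lambda>x. f x * g x)"
proof -
  obtain c1 where c1: "\<And>x. f x = peval m r1 c1 x" using assms unfolding inP_def by auto
  obtain c2 where c2: "\<And>x. g x = peval m r2 c2 x" using assms unfolding inP_def by auto
  define G where "G = (\<lambda>p::(nat\<Rightarrow>nat)\<times>(nat\<Rightarrow>nat). (\<lambda>i. fst p i + snd p i))"
  define P where "P = exps m r1 \<times> exps m r2"
  define c where "c = (\<lambda>e. \<Sum>p\<in>{p \<in> P. G p = e}. c1 (fst p) * c2 (snd p))"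
  have GT: "G ` P \<subseteq> exps m (r1 + r2)"
    by (auto simp: G_def P_def exps_def sum.distrib)
  have finP: "finite P" by (simp add: P_def finite_exps)
  show ?thesis unfolding inP_def
  proof (intro exI allI)
    fix x :: "nat \<Rightarrow> 'a"
    have mon: "(\<Prod>i<m. x i ^ G p i) = (\<Prod>i<m. x i ^ fst p i) * (\<Prod>i<m. x i ^ snd p i)" for p
      by (simp add: G_def power_add prod.distrib)
    have "f x * g x = (\<Sum>p\<in>P. c1 (fst p) * c2 (snd p) * (\<Prod>i<m. x i ^ G p i))"
      unfolding c1 c2 peval_def P_def sum_product sum.cartesian_product mon
      by (rule sum.cong) (auto simp: algebra_simps)
    also have "\<dots> = (\<Sum>e\<in>exps m (r1+r2). \<Sum>p\<in>{p\<in>P. G p = e}. c1 (fst p) * c2 (snd p) * (\<Prod>i<m. x i ^ G p i))"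
      by (rule sum.group[OF finP finite_exps GT, symmetric])
    also have "\<dots> = peval m (r1 + r2) c x"
      unfolding peval_def c_def sum_distrib_right
      by (rule sum.cong[OF refl], rule sum.cong) auto
    finally show "f x * g x = peval m (r1 + r2) c x" .
  qed
qed

lemma inP_prod: "finite I \<Longrightarrow> (\<And>i. i \<in> I \<Longrightarrow> inP m (d i) (f i)) \<Longrightarrow> inP m (\<Sum>i\<in>I. d i) (\<lambda>x. \<Prod>i\<in>I. f i x)"
  by (induction I rule: finite_induct) (auto intro: inP_mult inP_const)

lemma inP_diff: "inP m r f \<Longrightarrow> inP m r g \<Longrightarrow> inP m r (\<lambda>x. f x - g x)"
proof -
  assume a: "inP m r f" "inP m r g"
  have "inP m r (\<lambda>x. - g x)" using inP_mult[OF inP_const[of m 0 "-1"] a(2)] by simp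
  from inP_add[OF a(1) this] show ?thesis by simp
qed

lemma card_ge2: "2 \<le> CARD('a::{field,finite})"
proof -
  have "card {0::'a, 1} = 2" by simp
  moreover have "card {0::'a, 1} \<le> CARD('a)" by (rule card_mono) auto
  ultimately show ?thesis by simp
qed

lemma ff_pow_q1:
  fixes y :: "'a::{field,finite}"
  assumes "y \<noteq> 0" shows "y ^ (CARD('a) - 1) = 1"
proof -
  let ?N = "UNIV - {0::'a}"
  have inj: "inj_on (\<lambda>z. y * z) ?N" using assms by (auto simp: inj_on_def)
  have img: "(\<lambda>z. y * z) ` ?N = ?N"
  proof
    show "(\<lambda>z. y * z) ` ?N \<subseteq> ?N" using assms by auto
    show "?N \<subseteq> (\<lambda>z. y * z) ` ?N"
    proof
      fix w assume "w \<in> ?N"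
      hence "w = y * (w / y)" "w / y \<in> ?N" using assms by auto
      thus "w \<in> (\<lambda>z. y * z) ` ?N" by blast
    qed
  qed
  have "prod (\<lambda>z. z) ?N = prod (\<lambda>z. z) ((\<lambda>z. y * z) ` ?N)" using img by simp
  also have "\<dots> = prod (\<lambda>z. y * z) ?N" by (simp add: prod.reindex[OF inj])
  also have "\<dots> = y ^ card ?N * prod (\<lambda>z. z) ?N" by (simp add: prod.distrib)
  finally have "y ^ card ?N * prod (\<lambda>z. z) ?N = 1 * prod (\<lambda>z. z) ?N" by simp
  moreover have "prod (\<lambda>z. z) ?N \<noteq> 0" by (simp add: prod_zero_iff)
  ultimately have "y ^ card ?N = 1" by (metis mult_right_cancel)
  moreover have "card ?N = CARD('a) - 1" by (simp add: card_Diff_subset)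
  ultimately show ?thesis by simp
qed

definition red :: "nat \<Rightarrow> nat \<Rightarrow> nat" where
  "red q i = (if i = 0 then 0 else (i - 1) mod (q - 1) + 1)"

lemma red_le: "red q i \<le> i"
proof -
  have "(i - 1) mod (q - 1) \<le> i - 1" by (rule mod_less_eq_dividend)
  moreover have "i \<noteq> 0 \<Longrightarrow> red q i = (i - 1) mod (q - 1) + 1" by (simp add: red_def)
  ultimately show ?thesis by (cases "i = 0") (simp add: red_def, linarith)
qed

lemma red_lt: "2 \<le> q \<Longrightarrow> red q i < q"
proof -
  assume q: "2 \<le> q"
  have "(i - 1) mod (q - 1) < q - 1" by (rule mod_less_divisor) (use q in linarith)
  moreover have "i \<noteq> 0 \<Longrightarrow> red q i = (i - 1) mod (q - 1) + 1" by (simp add: red_def)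
  ultimately show ?thesis using q by (cases "i = 0") (simp add: red_def, linarith)
qed

lemma ff_pow_red:
  fixes y :: "'a::{field,finite}"
  shows "y ^ i = y ^ red CARD('a) i"
proof (cases i)
  case 0 thus ?thesis by (simp add: red_def)
next
  case (Suc j)
  let ?q = "CARD('a)"
  show ?thesis
  proof (cases "y = 0")
    case True thus ?thesis using Suc by (simp add: red_def)
  next
    case y: False
    have "y ^ j = y ^ ((?q - 1) * (j div (?q - 1)) + j mod (?q - 1))"
      by (simp only: mult_div_mod_eq)
    also have "\<dots> = (y ^ (?q - 1)) ^ (j div (?q - 1)) * y ^ (j mod (?q - 1))"
      by (simp only: power_add power_mult)
    also have "\<dots> = y ^ (j mod (?q - 1))" using ff_pow_q1[OF y] by simp
    finally have "y ^ j = y ^ (j mod (?q - 1))" .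
    thus ?thesis using Suc by (simp add: red_def power_Suc2)
  qed
qed

lemma mono_inP:
  assumes "\<forall>i\<ge>m. e i = 0" "(\<Sum>i<m. e i) \<le> d"
  shows "inP m d (\<lambda>x. a * (\<Prod>i<m. x i ^ e i))"
proof -
  have z: "e \<in> exps m d" using assms by (auto simp: exps_def)
  show ?thesis unfolding inP_def peval_def
    by (intro exI[of _ "\<lambda>e'. if e' = e then a else 0"]) (simp only: sum_delta_mult[OF finite_exps z], simp)
qed

lemma decomp:
  fixes f :: "(nat \<Rightarrow> 'a::{field,finite}) \<Rightarrow> 'a"
  assumes "inP (Suc m) r f"
  shows "\<exists>h. (\<forall>k. inP m (r - k) (h k)) \<and> (\<forall>k>r. \<forall>x. h k x = 0) \<and>
             (\<forall>x. f x = (\<Sum>k<CARD('a). x m ^ k * h k x))"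
proof -
  let ?q = "CARD('a)"
  obtain c where c: "\<And>x. f x = peval (Suc m) r c x" using assms unfolding inP_def by auto
  define E where "E = exps (Suc m) r"
  define h where "h = (\<lambda>k x. \<Sum>e\<in>{e\<in>E. red ?q (e m) = k}. c e * (\<Prod>i<m. x i ^ e i))"
  have Esum: "(\<Sum>i<m. e i) + e m \<le> r" "\<forall>i\<ge>Suc m. e i = 0" if "e \<in> E" for e
    using that by (auto simp: E_def exps_def)
  have P1: "inP m (r - k) (h k)" for k
    unfolding h_def
  proof (rule inP_sum)
    show "finite {e \<in> E. red ?q (e m) = k}" by (simp add: E_def finite_exps)
    fix e assume e: "e \<in> {e \<in> E. red ?q (e m) = k}"
    have "(\<lambda>x. c e * (\<Prod>i<m. x i ^ e i)) = (\<lambda>x. c e * (\<Prod>i<m. x i ^ (e(m:=0)) i))"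
      by (auto simp: fun_eq_iff intro!: prod.cong)
    moreover have "inP m (r - k) (\<lambda>x. c e * (\<Prod>i<m. x i ^ (e(m:=0)) i))"
    proof (rule mono_inP)
      show "\<forall>i\<ge>m. (e(m := 0)) i = 0" using Esum(2)[of e] e by auto
      have "(\<Sum>i<m. (e(m := 0)) i) = (\<Sum>i<m. e i)" by (rule sum.cong) auto
      moreover have "k \<le> e m" using e red_le[of ?q "e m"] by auto
      ultimately show "(\<Sum>i<m. (e(m := 0)) i) \<le> r - k" using Esum(1)[of e] e by auto
    qed
    ultimately show "inP m (r - k) (\<lambda>x. c e * (\<Prod>i<m. x i ^ e i))" by simp
  qed
  have P2: "h k x = 0" if "k > r" for k x
  proof -
    have emp: "{e\<in>E. red ?q (e m) = k} = {}"
      using that Esum red_le[of ?q] by (auto) (metis le_add2 le_trans not_less)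
    show ?thesis unfolding h_def emp by simp
  qed
  have P3: "f x = (\<Sum>k<?q. x m ^ k * h k x)" for x
  proof -
    have "f x = (\<Sum>e\<in>E. x m ^ red ?q (e m) * (c e * (\<Prod>i<m. x i ^ e i)))"
      unfolding c peval_def E_def
      by (rule sum.cong[OF refl]) (simp add: ff_pow_red[of "x m" "_ m"] algebra_simps)
    also have "\<dots> = (\<Sum>k<?q. \<Sum>e\<in>{e\<in>E. red ?q (e m) = k}. x m ^ red ?q (e m) * (c e * (\<Prod>i<m. x i ^ e i)))"
      by (rule sum.group[symmetric]) (auto simp: E_def finite_exps red_lt card_ge2)
    also have "\<dots> = (\<Sum>k<?q. x m ^ k * h k x)"
      unfolding h_def sum_distrib_left by (rule sum.cong[OF refl], rule sum.cong) auto
    finally show ?thesis .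
  qed
  show ?thesis using P1 P2 P3 by blast
qed

definition D :: "nat \<Rightarrow> nat \<Rightarrow> nat \<Rightarrow> nat" where
  "D q r m = (if m * (q - 1) \<le> r then 1 else (q - r mod (q - 1)) * q ^ (m - r div (q - 1) - 1))"

lemma D_split:
  assumes q: "2 \<le> q" and r: "r = t * (q - 1) + s" and s: "s < q - 1" and t: "t < m"
  shows "D q r m = (q - s) * q ^ (m - t - 1)"
proof -
  have dv: "r div (q - 1) = t" "r mod (q - 1) = s" using r s by simp_all
  have "r < (t + 1) * (q - 1)" using r s by simp
  also have "\<dots> \<le> m * (q - 1)" using t by (intro mult_right_mono) auto
  finally show ?thesis unfolding D_def dv by simp
qed

lemma D_ge1: "2 \<le> q \<Longrightarrow> 1 \<le> D q r m"
proof -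
  assume q: "2 \<le> q"
  have "r mod (q - 1) < q - 1" using q by (intro mod_less_divisor) simp
  hence "1 \<le> q - r mod (q - 1)" by simp
  moreover have "1 \<le> q ^ (m - r div (q - 1) - 1)" using q by simp
  ultimately show ?thesis unfolding D_def by (simp add: one_le_mult_iff)
qed

lemma D_num:
  assumes q: "2 \<le> q" and E: "E \<le> q - 1" "E \<le> r"
  shows "D q r (Suc m) \<le> (q - E) * D q (r - E) m"
proof (cases "Suc m * (q - 1) \<le> r")
  case True
  hence "D q r (Suc m) = 1" by (simp add: D_def)
  moreover have "1 \<le> q - E" using E q by simp
  ultimately show ?thesis using D_ge1[OF q, of "r - E" m] by (simp add: one_le_mult_iff)
next
  case False
  define Q where "Q = q - 1"
  have Q: "1 \<le> Q" "q = Q + 1" using q by (auto simp: Q_def)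
  define t where "t = r div Q"
  define s where "s = r mod Q"
  have rts: "r = t * Q + s" "s < Q" using Q by (simp_all add: t_def s_def)
  have tm: "t < Suc m"
  proof (rule ccontr)
    assume "\<not> t < Suc m"
    hence "Suc m \<le> t" by simp
    hence "Suc m * Q \<le> t * Q" by (rule mult_right_mono) simp
    thus False using False rts by (simp add: Q_def)
  qed
  have L: "D q r (Suc m) = (q - s) * q ^ (m - t)"
    using D_split[OF q, of r t s "Suc m"] rts tm by (simp add: Q_def)
  show ?thesis
  proof (cases "m * Q \<le> r - E")
    case True
    hence R: "D q (r - E) m = 1" by (simp add: D_def Q_def)
    have "m * Q \<le> t * Q + s" using True rts by simp
    have "t = m"
    proof (rule ccontr)
      assume "t \<noteq> m" hence "t + 1 \<le> m" using tm by simp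
      hence "(t + 1) * Q \<le> m * Q" by (rule mult_right_mono) simp
      thus False using True rts by simp
    qed
    hence "E \<le> s" using True rts E(2) by simp
    thus ?thesis using L R \<open>t = m\<close> by simp
  next
    case F2: False
    show ?thesis
    proof (cases "E \<le> s")
      case True
      have tm2: "t < m"
      proof (rule ccontr)
        assume "\<not> t < m" hence "t = m" using tm by simp
        thus False using F2 rts True by simp
      qed
      have R: "D q (r - E) m = (q - (s - E)) * q ^ (m - t - 1)"
        using D_split[OF q, of "r - E" t "s - E" m] rts True tm2 by (simp add: Q_def)
      obtain u where u: "s = E + u" using True le_Suc_ex by blast
      define a where "a = q - s"
      have a: "q = a + E + u" using rts(2) Q u by (simp add: a_def)
      have "m - t = Suc (m - t - 1)" using tm2 by simp
      hence pw: "q ^ (m - t) = q * q ^ (m - t - 1)" by (metis power_Suc)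
      have key: "a * (a + E + u) \<le> (a + u) * (a + E)" by (simp add: algebra_simps)
      have "D q r (Suc m) = a * (a + E + u) * q ^ (m - t - 1)" using L pw a u by simp
      also have "\<dots> \<le> (a + u) * (a + E) * q ^ (m - t - 1)" by (rule mult_right_mono[OF key]) simp
      also have "\<dots> = (q - E) * D q (r - E) m" using R a u by simp
      finally show ?thesis .
    next
      case False
      have t1: "1 \<le> t"
      proof (rule ccontr)
        assume "\<not> 1 \<le> t" hence "t = 0" by simp
        thus False using rts False E by simp
      qed
      define v where "v = E - s"
      have v: "E = s + v" "1 \<le> v" using False by (simp_all add: v_def)
      define w where "w = Q - E"
      have w: "Q = E + w" using E(1) by (simp add: w_def Q_def)
      obtain t' where t': "t = Suc t'" using t1 by (cases t) auto
      have rE: "r - E = t' * Q + (w + s)" using rts t' v w by simp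
      have R: "D q (r - E) m = (q - (w + s)) * q ^ (m - t' - 1)"
      proof (rule D_split[OF q])
        show "r - E = t' * (q - 1) + (w + s)" using rE by (simp add: Q_def)
        show "w + s < q - 1" using v w Q by linarith
        show "t' < m" using tm t' by simp
      qed
      have R': "D q (r - E) m = (1 + v) * q ^ (m - t)" using R v w Q t' by simp
      have key: "v + w + 1 \<le> (w + 1) * (1 + v)" by (simp add: algebra_simps)
      have "D q r (Suc m) = (v + w + 1) * q ^ (m - t)" using L v w Q by simp
      also have "\<dots> \<le> (w + 1) * (1 + v) * q ^ (m - t)" by (rule mult_right_mono[OF key]) simp
      also have "\<dots> = (q - E) * D q (r - E) m"
      proof -
        have qE: "q - E = w + 1" using v w Q by simp
        show ?thesis by (simp only: R' qE mult.assoc)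
      qed
      finally show ?thesis .
    qed
  qed
qed

definition pts :: "nat \<Rightarrow> (nat \<Rightarrow> 'a::zero) set" where
  "pts m = {x. \<forall>i\<ge>m. x i = 0}"

definition wt :: "nat \<Rightarrow> ((nat \<Rightarrow> 'a::zero) \<Rightarrow> 'b::zero) \<Rightarrow> nat" where
  "wt m f = card {x \<in> pts m. f x \<noteq> 0}"

lemma finite_pts: "finite (pts m :: (nat \<Rightarrow> 'a::{zero,finite}) set)"
proof -
  have "pts m \<subseteq> {f::nat\<Rightarrow>'a. \<forall>x. (x \<in> {..<m} \<longrightarrow> f x \<in> UNIV) \<and> (x \<notin> {..<m} \<longrightarrow> f x = 0)}"
    by (auto simp: pts_def)
  thus ?thesis by (rule finite_subset) (rule finite_set_of_finite_funs; simp)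
qed

lemma inP_dep:
  assumes "inP m r g" "\<forall>i<m. x i = y i" shows "g x = g y"
proof -
  obtain c where c: "\<And>x. g x = peval m r c x" using assms unfolding inP_def by auto
  show ?thesis unfolding c peval_def
    by (rule sum.cong[OF refl]) (use assms(2) in \<open>auto intro!: prod.cong\<close>)
qed

lemma uni_nonzeros:
  fixes a :: "nat \<Rightarrow> 'a::{field,finite}"
  assumes "a E \<noteq> 0"
  shows "CARD('a) - E \<le> card {y. (\<Sum>k\<le>E. a k * y ^ k) \<noteq> 0}"
proof -
  define p where "p = (\<Sum>k\<le>E. monom (a k) k)"
  have ev: "poly p y = (\<Sum>k\<le>E. a k * y ^ k)" for y
    by (simp add: p_def poly_sum poly_monom)
  have "coeff p E = a E" by (simp add: p_def coeff_sum)
  hence p0: "p \<noteq> 0" using assms by auto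
  have dg: "degree p \<le> E" unfolding p_def
    by (rule degree_sum_le) (auto intro: order.trans[OF degree_monom_le])
  have "card {y. poly p y = 0} \<le> E" using card_poly_roots_bound[OF p0] dg by simp
  moreover have "card {y. poly p y \<noteq> 0} = CARD('a) - card {y. poly p y = 0}"
  proof -
    have "{y. poly p y \<noteq> 0} = UNIV - {y. poly p y = 0}" by auto
    thus ?thesis by (simp add: card_Diff_subset)
  qed
  ultimately show ?thesis by (simp add: ev)
qed

lemma wt_bound:
  fixes f :: "(nat \<Rightarrow> 'a::{field,finite}) \<Rightarrow> 'a"
  shows "inP m r f \<Longrightarrow> x0 \<in> pts m \<Longrightarrow> f x0 \<noteq> 0 \<Longrightarrow> D CARD('a) r m \<le> wt m f"
proof (induction m arbitrary: r f x0)
  case 0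
  have "D CARD('a) r 0 = 1" by (simp add: D_def)
  moreover have "x0 \<in> {x \<in> pts 0. f x \<noteq> 0}" using 0 by auto
  hence "1 \<le> wt 0 f" unfolding wt_def using finite_pts[of 0]
    by (metis (no_types, lifting) One_nat_def Suc_leI card_gt_0_iff empty_iff finite_subset mem_Collect_eq subsetI)
  ultimately show ?case by simp
next
  case (Suc m)
  let ?q = "CARD('a)"
  have q2: "2 \<le> ?q" by (rule card_ge2)
  obtain h where h1: "\<And>k. inP m (r - k) (h k)" and h2: "\<And>k x. k > r \<Longrightarrow> h k x = 0"
    and h3: "\<And>x. f x = (\<Sum>k<?q. x m ^ k * h k x)"
    using decomp[OF Suc.prems(1)] by blast
  define dr where "dr = (\<lambda>x::nat\<Rightarrow>'a. x(m := 0))"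
  have dr_pts: "dr x \<in> pts m" if "x \<in> pts (Suc m)" for x
    using that by (auto simp: pts_def dr_def)
  have hdep: "h k x = h k (dr x)" for k x
    by (rule inP_dep[OF h1]) (auto simp: dr_def)
  define Z where "Z = {k. k < ?q \<and> (\<exists>x\<in>pts m. h k x \<noteq> 0)}"
  have finZ: "finite Z" by (simp add: Z_def)
  have Zne: "Z \<noteq> {}"
  proof
    assume Z: "Z = {}"
    have "f x0 = (\<Sum>k<?q. x0 m ^ k * h k (dr x0))" using h3 hdep by simp
    also have "\<dots> = 0"
      by (rule sum.neutral) (use Z dr_pts[OF Suc.prems(2)] in \<open>auto simp: Z_def\<close>)
    finally show False using Suc.prems(3) by simp
  qed
  define E where "E = Max Z"
  have EZ: "E \<in> Z" using finZ Zne by (simp add: E_def)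
  have Emax: "k \<in> Z \<Longrightarrow> k \<le> E" for k using finZ by (simp add: E_def)
  have Eq: "E \<le> ?q - 1" using EZ by (auto simp: Z_def)
  have Er: "E \<le> r"
  proof (rule ccontr)
    assume "\<not> E \<le> r" thus False using EZ h2 by (auto simp: Z_def)
  qed
  define S where "S = {x \<in> pts m. h E x \<noteq> 0}"
  obtain x1 where x1: "x1 \<in> pts m" "h E x1 \<noteq> 0" using EZ by (auto simp: Z_def)
  have IH: "D ?q (r - E) m \<le> card S"
    using Suc.IH[OF h1 x1] by (simp add: wt_def S_def)
  define T where "T = (\<lambda>x'. {y. f (x'(m := y)) \<noteq> 0})"
  have Tcard: "?q - E \<le> card (T x')" if x': "x' \<in> S" for x'
  proof -
    have xp: "x' \<in> pts m" "h E x' \<noteq> 0" using x' by (auto simp: S_def)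
    have "f (x'(m := y)) = (\<Sum>k\<le>E. h k x' * y ^ k)" for y
    proof -
      have dx: "dr (x'(m := y)) = x'" using xp by (auto simp: dr_def pts_def fun_eq_iff)
      have "f (x'(m := y)) = (\<Sum>k<?q. y ^ k * h k x')"
        using h3[of "x'(m := y)"] hdep[of _ "x'(m := y)"] dx by simp
      also have "\<dots> = (\<Sum>k\<le>E. y ^ k * h k x')"
      proof (rule sum.mono_neutral_right)
        show "{..E} \<subseteq> {..<?q}" using Eq q2 by auto
        show "\<forall>k\<in>{..<?q} - {..E}. y ^ k * h k x' = 0"
        proof
          fix k assume k: "k \<in> {..<?q} - {..E}"
          have "k \<notin> Z" using Emax k by force
          hence "h k x' = 0" using k xp by (auto simp: Z_def)
          thus "y ^ k * h k x' = 0" by simp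
        qed
      qed simp
      finally show ?thesis by (simp add: mult.commute)
    qed
    hence "T x' = {y. (\<Sum>k\<le>E. h k x' * y ^ k) \<noteq> 0}" by (simp add: T_def)
    thus ?thesis using uni_nonzeros[of "\<lambda>k. h k x'" E] xp by simp
  qed
  define g where "g = (\<lambda>p::(nat\<Rightarrow>'a)\<times>'a. (fst p)(m := snd p))"
  have finS: "finite S" using finite_pts[of m] unfolding S_def by (rule finite_subset[rotated]) auto
  have ginj: "inj_on g (Sigma S T)"
  proof (rule inj_onI)
    fix p p' assume pp: "p \<in> Sigma S T" "p' \<in> Sigma S T" "g p = g p'"
    have "fst p \<in> pts m" "fst p' \<in> pts m" using pp by (auto simp: S_def)
    hence "fst p m = 0" "fst p' m = 0" by (auto simp: pts_def)
    moreover have "snd p = snd p'" using pp(3) by (metis g_def fun_upd_same)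
    moreover have "\<forall>i. i \<noteq> m \<longrightarrow> fst p i = fst p' i" using pp(3)
      by (metis g_def fun_upd_other)
    ultimately have "fst p = fst p'" by (metis ext)
    thus "p = p'" using \<open>snd p = snd p'\<close> by (simp add: prod_eq_iff)
  qed
  have gim: "g ` Sigma S T \<subseteq> {x \<in> pts (Suc m). f x \<noteq> 0}"
    by (auto simp: g_def S_def T_def pts_def)
  have finW: "finite {x \<in> pts (Suc m). f x \<noteq> 0}" using finite_pts[of "Suc m"] by (rule finite_subset[rotated]) auto
  have c1: "card (Sigma S T) \<le> wt (Suc m) f"
    unfolding wt_def by (rule card_inj_on_le[OF ginj gim finW])
  have c2: "card (Sigma S T) = (\<Sum>x'\<in>S. card (T x'))"
    by (rule card_SigmaI[OF finS]) (simp add: T_def)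
  have c3: "(?q - E) * card S \<le> (\<Sum>x'\<in>S. card (T x'))"
    using sum_mono[of S "\<lambda>_. ?q - E" "\<lambda>x'. card (T x')"] Tcard by (simp add: mult.commute)
  have c4: "D ?q r (Suc m) \<le> (?q - E) * D ?q (r - E) m"
    by (rule D_num[OF q2 Eq Er])
  have c5: "(?q - E) * D ?q (r - E) m \<le> (?q - E) * card S"
    using IH by (rule mult_left_mono) simp
  show ?case using c1 c2 c3 c4 c5 by linarith
qed

lemma chi_subset: "chi_b b L x \<subseteq> {..<L}" by (auto simp: chi_b_def)

lemma finite_chi: "finite (chi_b b L x)" by (rule finite_subset[OF chi_subset]) simp

lemma w_b_le: "w_b b L x \<le> L"
  unfolding w_b_def using card_mono[OF finite_lessThan chi_subset] by simp

lemma chi_1: "chi_b 1 L x = {i. i < L \<and> x i \<noteq> 0}"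
  by (auto simp: chi_b_def)

lemma chi_mono: "b \<le> b' \<Longrightarrow> chi_b b L x \<subseteq> chi_b b' L x"
  by (auto simp: chi_b_def; meson less_le_trans)

lemma chi_Suc:
  assumes "1 \<le> b"
  shows "chi_b (Suc b) L x = chi_b b L x \<union> {i. i < L \<and> Suc i mod L \<in> chi_b b L x}"
proof (intro set_eqI iffI)
  fix i assume "i \<in> chi_b (Suc b) L x"
  then obtain j where j: "i < L" "j < Suc b" "x ((i + j) mod L) \<noteq> 0" by (auto simp: chi_b_def)
  show "i \<in> chi_b b L x \<union> {i. i < L \<and> Suc i mod L \<in> chi_b b L x}"
  proof (cases j)
    case 0 thus ?thesis using j assms by (auto simp: chi_b_def intro!: exI[of _ 0])
  next
    case (Suc j')
    have "(Suc i mod L + j') mod L = (i + j) mod L" using Suc by (simp add: mod_add_left_eq)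
    hence "Suc i mod L \<in> chi_b b L x" using j Suc by (auto simp: chi_b_def intro!: exI[of _ j'])
    thus ?thesis using j by auto
  qed
next
  fix i assume "i \<in> chi_b b L x \<union> {i. i < L \<and> Suc i mod L \<in> chi_b b L x}"
  thus "i \<in> chi_b (Suc b) L x"
  proof
    assume "i \<in> chi_b b L x" thus ?thesis using chi_mono[of b "Suc b"] by auto
  next
    assume "i \<in> {i. i < L \<and> Suc i mod L \<in> chi_b b L x}"
    then obtain j where j: "i < L" "j < b" "x ((Suc i mod L + j) mod L) \<noteq> 0" by (auto simp: chi_b_def)
    have "(Suc i mod L + j) mod L = (i + Suc j) mod L" by (simp add: mod_add_left_eq)
    thus ?thesis using j by (auto simp: chi_b_def)
  qed
qed

lemma pred_closed_all:
  assumes sub: "A \<subseteq> {..<L}" and a: "a \<in> A" and cl: "\<And>i. i < L \<Longrightarrow> Suc i mod L \<in> A \<Longrightarrow> i \<in> A"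
  shows "A = {..<L}"
proof -
  have down: "\<And>k. i \<in> A \<Longrightarrow> k \<le> i \<Longrightarrow> i - k \<in> A" for i
  proof -
    fix k show "i \<in> A \<Longrightarrow> k \<le> i \<Longrightarrow> i - k \<in> A"
    proof (induction k)
      case 0 thus ?case by simp
    next
      case (Suc k)
      hence ik: "i - k \<in> A" "i - k = Suc (i - Suc k)" by auto
      hence "i - k < L" using sub by auto
      hence "Suc (i - Suc k) mod L = i - k" using ik(2) by simp
      thus ?case using cl[of "i - Suc k"] ik \<open>i - k < L\<close> by simp
    qed
  qed
  have L0: "0 < L" using a sub by auto
  have "0 \<in> A" using down[OF a, of a] by simp
  hence "L - 1 \<in> A" using cl[of "L - 1"] L0 by simp
  hence "\<forall>i<L. i \<in> A"
  proof (intro allI impI)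
    fix i assume "L - 1 \<in> A" "i < L"
    hence "L - 1 - (L - 1 - i) \<in> A" using down[of "L - 1" "L - 1 - i"] by simp
    moreover have "L - 1 - (L - 1 - i) = i" using \<open>i < L\<close> by simp
    ultimately show "i \<in> A" by simp
  qed
  thus ?thesis using sub by auto
qed

lemma w_b_step:
  assumes b: "1 \<le> b" and ne: "chi_b b L x \<noteq> {}"
  shows "min (w_b b L x + 1) L \<le> w_b (Suc b) L x"
proof (cases "chi_b (Suc b) L x = chi_b b L x")
  case True
  have "chi_b b L x = {..<L}"
  proof -
    obtain a where "a \<in> chi_b b L x" using ne by auto
    thus ?thesis
      by (rule pred_closed_all[OF chi_subset]) (use True chi_Suc[OF b, of L x] in blast)
  qed
  thus ?thesis using True by (simp add: w_b_def)
next
  case False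
  hence "chi_b b L x \<subset> chi_b (Suc b) L x" using chi_mono[of b "Suc b" L x] by auto
  hence "card (chi_b b L x) < card (chi_b (Suc b) L x)" by (rule psubset_card_mono[OF finite_chi])
  thus ?thesis by (simp add: w_b_def)
qed

lemma w_b_lower:
  assumes "\<exists>i<L. x i \<noteq> 0" "1 \<le> b"
  shows "min (card {i. i < L \<and> x i \<noteq> 0} + b - 1) L \<le> w_b b L x"
  using assms(2)
proof (induction b rule: dec_induct)
  case base
  have "w_b 1 L x = card {i. i < L \<and> x i \<noteq> 0}" unfolding w_b_def chi_1 ..
  thus ?case by simp
next
  case (step b)
  have "chi_b 1 L x \<noteq> {}" using assms(1) unfolding chi_1 by auto
  hence ne: "chi_b b L x \<noteq> {}" using chi_mono[OF step.hyps(1), of L x] by auto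
  show ?case using w_b_step[OF step.hyps(1) ne] step.IH by linarith
qed

lemma w_b_interval:
  assumes sup: "\<And>j. x j \<noteq> 0 \<longleftrightarrow> j < d" and b: "1 \<le> b"
  shows "w_b b L x \<le> d + (b - 1)"
proof -
  have "chi_b b L x \<subseteq> {..<d} \<union> {L - (b - 1)..<L}"
  proof
    fix i assume i: "i \<in> chi_b b L x"
    then obtain j where j: "i < L" "j < b" "x ((i + j) mod L) \<noteq> 0" by (auto simp: chi_b_def)
    show "i \<in> {..<d} \<union> {L - (b - 1)..<L}"
    proof (rule ccontr)
      assume "i \<notin> {..<d} \<union> {L - (b - 1)..<L}"
      hence "d \<le> i" "i + j < L" using j by auto
      hence "(i + j) mod L = i + j" by simp
      thus False using j(3) sup[of "i + j"] \<open>d \<le> i\<close> by simp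
    qed
  qed
  hence "w_b b L x \<le> card ({..<d} \<union> {L - (b - 1)..<L})"
    unfolding w_b_def by (rule card_mono[rotated]) simp
  also have "\<dots> \<le> card {..<d} + card {L - (b - 1)..<L}" by (rule card_Un_le)
  also have "\<dots> \<le> d + (b - 1)" by simp
  finally show ?thesis .
qed

lemma w_b_prefix_zero:
  assumes z: "\<And>i. i < p \<Longrightarrow> x i = 0" and pL: "p \<le> L" and b1: "1 \<le> b" and bp: "b \<le> Suc p"
  shows "w_b b L x \<le> L - (Suc p - b)"
proof -
  have "chi_b b L x \<subseteq> {..<L} - {..<Suc p - b}"
  proof
    fix i assume i: "i \<in> chi_b b L x"
    then obtain j where j: "i < L" "j < b" "x ((i + j) mod L) \<noteq> 0" by (auto simp: chi_b_def)
    show "i \<in> {..<L} - {..<Suc p - b}"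
    proof (rule ccontr)
      assume "i \<notin> {..<L} - {..<Suc p - b}"
      hence "i + j < p" using j bp b1 by auto
      hence "(i + j) mod L = i + j" using pL by simp
      thus False using j(3) z \<open>i + j < p\<close> by simp
    qed
  qed
  hence "w_b b L x \<le> card ({..<L} - {..<Suc p - b})"
    unfolding w_b_def by (rule card_mono[rotated]) simp
  also have "\<dots> = L - (Suc p - b)" using pL bp by (simp add: card_Diff_subset)
  finally show ?thesis .
qed

lemma digits_eq:
  assumes "0 < (q::nat)"
  shows "j < q ^ m \<Longrightarrow> j' < q ^ m \<Longrightarrow> (\<forall>i<m. (j div q ^ i) mod q = (j' div q ^ i) mod q) \<Longrightarrow> j = j'"
proof (induction m arbitrary: j j')
  case 0 thus ?case by simp
next
  case (Suc m)
  have m0: "j mod q = j' mod q" using Suc.prems(3)[rule_format, of 0] by simp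
  have lt: "j div q < q ^ m" "j' div q < q ^ m" using Suc.prems(1,2) assms
    by (simp_all add: less_mult_imp_div_less mult.commute)
  have "\<forall>i<m. (j div q div q ^ i) mod q = (j' div q div q ^ i) mod q"
  proof (intro allI impI)
    fix i assume "i < m"
    hence "Suc i < Suc m" by simp
    hence "(j div q ^ Suc i) mod q = (j' div q ^ Suc i) mod q" using Suc.prems(3) by blast
    thus "(j div q div q ^ i) mod q = (j' div q div q ^ i) mod q" by (simp only: div_mult2_eq power_Suc)
  qed
  hence "j div q = j' div q" using Suc.IH[OF lt] by simp
  thus ?case using m0 by (metis div_mult_mod_eq)
qed

lemma card_pts: "card (pts m :: (nat \<Rightarrow> 'a::{zero,finite}) set) = CARD('a) ^ m"
proof (induction m)
  case 0
  have "pts 0 = {(\<lambda>_. 0) :: nat \<Rightarrow> 'a}" by (auto simp: pts_def)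
  thus ?case by simp
next
  case (Suc m)
  define g where "g = (\<lambda>p::(nat\<Rightarrow>'a)\<times>'a. (fst p)(m := snd p))"
  have inj: "inj_on g (pts m \<times> UNIV)"
  proof (rule inj_onI)
    fix p p' assume pp: "p \<in> pts m \<times> UNIV" "p' \<in> pts m \<times> UNIV" "g p = g p'"
    hence "fst p m = 0" "fst p' m = 0" by (auto simp: pts_def)
    moreover have "snd p = snd p'" using pp(3) by (metis g_def fun_upd_same)
    moreover have "\<forall>i. i \<noteq> m \<longrightarrow> fst p i = fst p' i" using pp(3) by (metis g_def fun_upd_other)
    ultimately have "fst p = fst p'" by (metis ext)
    thus "p = p'" using \<open>snd p = snd p'\<close> by (simp add: prod_eq_iff)
  qed
  have img: "g ` (pts m \<times> UNIV) = pts (Suc m)"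
  proof
    show "g ` (pts m \<times> UNIV) \<subseteq> pts (Suc m)" by (auto simp: g_def pts_def)
    show "pts (Suc m) \<subseteq> g ` (pts m \<times> UNIV)"
    proof
      fix x :: "nat \<Rightarrow> 'a" assume x: "x \<in> pts (Suc m)"
      have "x = g (x(m := 0), x m)" by (simp add: g_def)
      moreover have "(x(m := 0), x m) \<in> pts m \<times> UNIV" using x by (auto simp: pts_def)
      ultimately show "x \<in> g ` (pts m \<times> UNIV)" by blast
    qed
  qed
  have "card (pts (Suc m) :: (nat \<Rightarrow> 'a) set) = card ((pts m :: (nat \<Rightarrow> 'a) set) \<times> (UNIV :: 'a set))"
    using card_image[OF inj] img by simp
  also have "\<dots> = CARD('a) ^ Suc m" using Suc by (simp add: card_cartesian_product)
  finally show ?case .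
qed

context
  fixes alpha :: "nat \<Rightarrow> 'a::{field,finite}"
  assumes enum: "bij_betw alpha {..<CARD('a)} (UNIV :: 'a set)" and alpha0: "alpha 0 = 0"
begin


lemma alpha_inj: "a < CARD('a) \<Longrightarrow> b < CARD('a) \<Longrightarrow> alpha a = alpha b \<longleftrightarrow> a = b"
  using enum by (auto simp: bij_betw_def inj_on_def)

lemma lp_pts: "lex_point alpha CARD('a) m j \<in> pts m"
  by (simp add: pts_def lex_point_def)

lemma lp_inj: "inj_on (lex_point alpha CARD('a) m) {..<CARD('a) ^ m}"
proof (rule inj_onI)
  fix j j' assume jj: "j \<in> {..<CARD('a) ^ m}" "j' \<in> {..<CARD('a) ^ m}" "lex_point alpha CARD('a) m j = lex_point alpha CARD('a) m j'"
  have q0: "0 < CARD('a)" by simp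
  show "j = j'"
  proof (rule digits_eq[OF q0])
    show "j < CARD('a) ^ m" "j' < CARD('a) ^ m" using jj by auto
    show "\<forall>i<m. (j div CARD('a) ^ i) mod CARD('a) = (j' div CARD('a) ^ i) mod CARD('a)"
    proof (intro allI impI)
      fix i assume i: "i < m"
      have "lex_point alpha CARD('a) m j (m - 1 - i) = lex_point alpha CARD('a) m j' (m - 1 - i)" using jj(3) by simp
      moreover have "m - 1 - (m - 1 - i) = i" using i by simp
      ultimately have "alpha ((j div CARD('a) ^ i) mod CARD('a)) = alpha ((j' div CARD('a) ^ i) mod CARD('a))"
        using i by (simp add: lex_point_def)
      thus "(j div CARD('a) ^ i) mod CARD('a) = (j' div CARD('a) ^ i) mod CARD('a)" by (simp add: alpha_inj)
    qed
  qed
qed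

lemma lp_bij: "bij_betw (lex_point alpha CARD('a) m) {..<CARD('a) ^ m} (pts m)"
proof -
  have sub: "lex_point alpha CARD('a) m ` {..<CARD('a) ^ m} \<subseteq> pts m" using lp_pts by auto
  have "card (lex_point alpha CARD('a) m ` {..<CARD('a) ^ m}) = card (pts m :: (nat \<Rightarrow> 'a) set)"
  proof -
    have "card (pts m :: (nat \<Rightarrow> 'a) set) = CARD('a) ^ m" by (rule card_pts)
    thus ?thesis using card_image[OF lp_inj] by simp
  qed
  hence "lex_point alpha CARD('a) m ` {..<CARD('a) ^ m} = pts m"
    by (rule card_subset_eq[OF finite_pts sub])
  thus ?thesis using lp_inj by (simp add: bij_betw_def)
qed

end

definition cw :: "(nat \<Rightarrow> 'a::{field,finite}) \<Rightarrow> nat \<Rightarrow> ((nat \<Rightarrow> 'a) \<Rightarrow> 'a) \<Rightarrow> nat \<Rightarrow> 'a" where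
  "cw alpha m f = (\<lambda>j. if j < CARD('a) ^ m then f (lex_point alpha CARD('a) m j) else 0)"

lemma RM_iff: "c \<in> RM alpha r m \<longleftrightarrow> (\<exists>f. inP m r f \<and> c = cw alpha m f)"
proof
  assume "c \<in> RM alpha r m"
  then obtain cc where "c = (\<lambda>j. if j < CARD('a) ^ m then peval m r cc (lex_point alpha CARD('a) m j) else 0)"
    by (auto simp: RM_def)
  moreover have "inP m r (peval m r cc)" by (auto simp: inP_def)
  ultimately show "\<exists>f. inP m r f \<and> c = cw alpha m f" by (auto simp: cw_def)
next
  assume "\<exists>f. inP m r f \<and> c = cw alpha m f"
  then obtain f cc where fc: "c = cw alpha m f" "\<And>x. f x = peval m r cc x" by (auto simp: inP_def)
  hence "f = peval m r cc" by auto
  thus "c \<in> RM alpha r m" using fc(1) by (auto simp: RM_def cw_def)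
qed

lemma RM_subspace: "fs.subspace (RM alpha r m)"
  unfolding fs.subspace_def
proof (intro conjI ballI allI)
  show "0 \<in> RM alpha r m" unfolding RM_iff
    by (rule exI[of _ "\<lambda>x. 0"]) (auto simp: inP_zero cw_def fun_eq_iff)
next
  fix x y assume "x \<in> RM alpha r m" "y \<in> RM alpha r m"
  then obtain f g where fg: "inP m r f" "x = cw alpha m f" "inP m r g" "y = cw alpha m g"
    by (auto simp: RM_iff)
  show "x + y \<in> RM alpha r m" unfolding RM_iff
    by (rule exI[of _ "\<lambda>z. f z + g z"]) (auto simp: fg inP_add cw_def fun_eq_iff)
next
  fix a x assume "x \<in> RM alpha r m"
  then obtain f where f: "inP m r f" "x = cw alpha m f" by (auto simp: RM_iff)
  have "inP m (0 + r) (\<lambda>z. a * f z)" by (rule inP_mult[OF inP_const f(1)])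
  thus "fscale a x \<in> RM alpha r m" unfolding RM_iff
    by (intro exI[of _ "\<lambda>z. a * f z"]) (auto simp: f cw_def fun_eq_iff fscale_def)
qed

lemma N1:
  fixes q :: nat
  assumes q: "0 < q" and t: "t \<le> m" and j: "j < q ^ m"
  shows "(\<forall>i<t. (j div q ^ (m - 1 - i)) mod q = 0) \<longleftrightarrow> j < q ^ (m - t)"
proof -
  define P where "P = q ^ (m - t)"
  define J where "J = j div P"
  have P0: "0 < P" using q by (simp add: P_def)
  have qm: "q ^ m = q ^ t * P" using t by (simp add: P_def power_add[symmetric])
  have Jlt: "J < q ^ t" using j qm by (simp add: J_def less_mult_imp_div_less)
  have dig: "j div q ^ (m - 1 - i) = J div q ^ (t - 1 - i)" if "i < t" for i
  proof -
    have "m - 1 - i = (m - t) + (t - 1 - i)" using that t by simp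
    hence "q ^ (m - 1 - i) = P * q ^ (t - 1 - i)" by (simp add: P_def power_add)
    thus ?thesis by (simp add: J_def div_mult2_eq)
  qed
  have "(\<forall>i<t. (j div q ^ (m - 1 - i)) mod q = 0) \<longleftrightarrow> (\<forall>l<t. (J div q ^ l) mod q = 0)"
  proof
    assume A: "\<forall>i<t. (j div q ^ (m - 1 - i)) mod q = 0"
    show "\<forall>l<t. (J div q ^ l) mod q = 0"
    proof (intro allI impI)
      fix l assume l: "l < t"
      have "t - 1 - (t - 1 - l) = l" using l by simp
      thus "(J div q ^ l) mod q = 0" using A[rule_format, of "t - 1 - l"] dig[of "t - 1 - l"] l by simp
    qed
  next
    assume "\<forall>l<t. (J div q ^ l) mod q = 0"
    thus "\<forall>i<t. (j div q ^ (m - 1 - i)) mod q = 0" using dig by simp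
  qed
  also have "\<dots> \<longleftrightarrow> J = 0"
  proof
    assume "\<forall>l<t. (J div q ^ l) mod q = 0"
    thus "J = 0" using digits_eq[OF q Jlt, of 0] q by simp
  qed simp
  also have "\<dots> \<longleftrightarrow> j < P" using P0 by (simp add: J_def Euclidean_Rings.div_eq_0_iff)
  finally show ?thesis by (simp add: P_def)
qed

lemma N2:
  fixes q :: nat
  assumes q: "0 < q" and t: "t < m" and j: "j < q ^ (m - t)"
  shows "(j div q ^ (m - 1 - t)) mod q < q - s \<longleftrightarrow> j < (q - s) * q ^ (m - 1 - t)"
proof -
  define P where "P = q ^ (m - 1 - t)"
  have P0: "0 < P" using q by (simp add: P_def)
  have "m - t = Suc (m - 1 - t)" using t by simp
  hence "q ^ (m - t) = q * P" by (simp add: P_def)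
  hence "j div P < q" using j by (simp add: less_mult_imp_div_less)
  hence "(j div P) mod q = j div P" by simp
  thus ?thesis using div_less_iff_less_mult[OF P0] by (simp add: P_def)
qed

context
  fixes alpha :: "nat \<Rightarrow> 'a::{field,finite}"
  assumes enum: "bij_betw alpha {..<CARD('a)} (UNIV :: 'a set)" and alpha0: "alpha 0 = 0"
begin

lemma cw_weight:
  "card {j. j < CARD('a) ^ m \<and> cw alpha m f j \<noteq> 0} = wt m f"
proof -
  let ?lp = "lex_point alpha CARD('a) m"
  have bij: "bij_betw ?lp {..<CARD('a) ^ m} (pts m)" by (rule lp_bij[OF enum alpha0])
  have A: "{j. j < CARD('a) ^ m \<and> cw alpha m f j \<noteq> 0} = {j \<in> {..<CARD('a) ^ m}. f (?lp j) \<noteq> 0}"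
    by (auto simp: cw_def)
  have "bij_betw ?lp {j \<in> {..<CARD('a) ^ m}. f (?lp j) \<noteq> 0} {x \<in> pts m. f x \<noteq> 0}"
    using bij by (auto simp: bij_betw_def inj_on_def image_iff)
  thus ?thesis unfolding A wt_def by (rule bij_betw_same_card)
qed

lemma one_minus_pow_ne0:
  fixes y :: "'a::{field,finite}"
  shows "1 - y ^ (CARD('a) - 1) \<noteq> 0 \<longleftrightarrow> y = 0"
proof (cases "y = 0")
  case True
  obtain k where k: "CARD('a) - 1 = Suc k" using card_ge2[where 'a='a] by (cases "CARD('a) - 1") auto
  thus ?thesis using True by (simp only: k) simp
next
  case False thus ?thesis using ff_pow_q1[OF False] by simp
qed

lemma c0_exists:
  assumes r: "r \<le> m * (CARD('a) - 1)"
  shows "\<exists>c\<in>RM alpha r m. \<forall>j. c j \<noteq> 0 \<longleftrightarrow> j < D CARD('a) r m"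
proof -
  define q where "q = CARD('a)"
  have q2: "2 \<le> q" using card_ge2[where 'a='a] by (simp add: q_def)
  define t where "t = r div (q - 1)"
  define s where "s = r mod (q - 1)"
  have rts: "r = t * (q - 1) + s" "s < q - 1"
    using div_mult_mod_eq[of r "q - 1"] q2 by (simp_all add: t_def s_def)
  have tm: "t \<le> m"
  proof (rule ccontr)
    assume "\<not> t \<le> m" hence "Suc m \<le> t" by simp
    hence "Suc m * (q - 1) \<le> t * (q - 1)" by (rule mult_right_mono) simp
    thus False using r rts q2 by (simp add: q_def)
  qed
  have s0: "t = m \<Longrightarrow> s = 0" using r rts by (simp add: q_def)
  define f0 where "f0 = (\<lambda>x::nat\<Rightarrow>'a. (\<Prod>i<t. 1 - x i ^ (q - 1)) * (\<Prod>u<s. x t - alpha (q - 1 - u)))"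
  have F1: "inP m (\<Sum>i<t. q - 1) (\<lambda>x. \<Prod>i<t. 1 - x i ^ (q - 1))"
  proof (rule inP_prod)
    fix i assume i: "i \<in> {..<t}"
    have "inP m (\<Sum>_<q - 1. 1) (\<lambda>x. \<Prod>_<q - 1. x i)"
    proof (rule inP_prod)
      show "inP m 1 (\<lambda>x. x i)" by (rule inP_var) (use i tm in simp)
    qed simp
    hence "inP m (q - 1) (\<lambda>x. x i ^ (q - 1))" by simp
    thus "inP m (q - 1) (\<lambda>x. 1 - x i ^ (q - 1))" by (rule inP_diff[OF inP_const])
  qed simp
  have F2: "inP m (\<Sum>u<s. 1) (\<lambda>x. \<Prod>u<s. x t - alpha (q - 1 - u))"
  proof (rule inP_prod)
    fix u assume u: "u \<in> {..<s}"
    hence "t < m" using s0 tm by (cases "t = m") auto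
    thus "inP m 1 (\<lambda>x. x t - alpha (q - 1 - u))" by (intro inP_diff inP_var inP_const)
  qed simp
  have "inP m (t * (q - 1) + s) f0"
    using inP_mult[OF F1 F2] by (simp add: f0_def mult.commute)
  hence inPf: "inP m r f0" using rts by simp
  define c where "c = cw alpha m f0"
  have cRM: "c \<in> RM alpha r m" using inPf by (auto simp: RM_iff c_def)
  let ?lp = "lex_point alpha q m"
  define dig where "dig = (\<lambda>j i. (j div q ^ (m - 1 - i)) mod q)"
  have digq: "dig j i < q" for j i using q2 by (simp add: dig_def)
  have lpi: "i < m \<Longrightarrow> ?lp j i = alpha (dig j i)" for j i by (simp add: lex_point_def dig_def)
  have zero_iff: "alpha a = 0 \<longleftrightarrow> a = 0" if "a < q" for a
    using alpha_inj[OF enum alpha0, of a 0] that q2 alpha0 by (simp add: q_def)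
  have f0_ne: "f0 x \<noteq> 0 \<longleftrightarrow> (\<forall>i<t. x i = 0) \<and> (\<forall>u<s. x t \<noteq> alpha (q - 1 - u))" for x
    unfolding f0_def using one_minus_pow_ne0 by (simp add: prod_zero_iff q_def lessThan_iff Ball_def)
  have Dn: "D q r m \<le> q ^ m \<and> (\<forall>j<q ^ m. f0 (?lp j) \<noteq> 0 \<longleftrightarrow> j < D q r m)"
  proof (cases "s = 0")
    case True
    have Deq: "D q r m = q ^ (m - t)"
    proof (cases "t = m")
      case True thus ?thesis using rts \<open>s = 0\<close> by (simp add: D_def)
    next
      case False
      hence "t < m" using tm by simp
      hence D1: "D q r m = (q - 0) * q ^ (m - t - 1)" using D_split[OF q2 rts(1)] rts(2) \<open>s = 0\<close> by simp
      have mt: "m - t = Suc (m - t - 1)" using \<open>t < m\<close> by simp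
      have P: "q ^ (m - t) = q * q ^ (m - t - 1)" by (metis mt power_Suc)
      show ?thesis using D1 P by simp
    qed
    have "\<forall>j<q ^ m. f0 (?lp j) \<noteq> 0 \<longleftrightarrow> j < q ^ (m - t)"
    proof (intro allI impI)
      fix j assume j: "j < q ^ m"
      have "f0 (?lp j) \<noteq> 0 \<longleftrightarrow> (\<forall>i<t. dig j i = 0)"
        using f0_ne True lpi tm zero_iff digq by auto
      also have "\<dots> \<longleftrightarrow> j < q ^ (m - t)" unfolding dig_def using N1[of q t m j] q2 tm j by simp
      finally show "f0 (?lp j) \<noteq> 0 \<longleftrightarrow> j < q ^ (m - t)" .
    qed
    moreover have "q ^ (m - t) \<le> q ^ m" using q2 by (intro power_increasing) auto
    ultimately show ?thesis using Deq by simp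
  next
    case False
    hence tm': "t < m" using s0 tm by (cases "t = m") auto
    have Deq: "D q r m = (q - s) * q ^ (m - 1 - t)" using D_split[OF q2 rts tm'] by simp
    have "\<forall>j<q ^ m. f0 (?lp j) \<noteq> 0 \<longleftrightarrow> j < (q - s) * q ^ (m - 1 - t)"
    proof (intro allI impI)
      fix j assume j: "j < q ^ m"
      have A: "(\<forall>u<s. alpha (dig j t) \<noteq> alpha (q - 1 - u)) \<longleftrightarrow> dig j t < q - s"
      proof -
        have "(\<forall>u<s. alpha (dig j t) \<noteq> alpha (q - 1 - u)) \<longleftrightarrow> (\<forall>u<s. dig j t \<noteq> q - 1 - u)"
          using alpha_inj[OF enum alpha0] digq q2 by (auto simp: q_def)
        also have "\<dots> \<longleftrightarrow> dig j t < q - s"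
        proof
          assume H: "\<forall>u<s. dig j t \<noteq> q - 1 - u"
          show "dig j t < q - s"
          proof (rule ccontr)
            assume "\<not> dig j t < q - s"
            hence "q - 1 - (q - 1 - dig j t) = dig j t" "q - 1 - dig j t < s" using digq[of j t] by auto
            thus False using H[rule_format, of "q - 1 - dig j t"] by simp
          qed
        qed (use digq in auto)
        finally show ?thesis .
      qed
      have "f0 (?lp j) \<noteq> 0 \<longleftrightarrow> (\<forall>i<t. dig j i = 0) \<and> dig j t < q - s"
        using f0_ne[of "?lp j"] lpi[OF tm'] lpi tm' zero_iff digq A by auto
      also have "\<dots> \<longleftrightarrow> j < q ^ (m - t) \<and> dig j t < q - s"
        unfolding dig_def using N1[of q t m j] q2 tm j by simp
      also have "\<dots> \<longleftrightarrow> j < (q - s) * q ^ (m - 1 - t)"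
      proof -
        have mt: "m - t = Suc (m - 1 - t)" using tm' by simp
        have "(q - s) * q ^ (m - 1 - t) \<le> q * q ^ (m - 1 - t)" by (rule mult_right_mono) simp_all
        also have "q * q ^ (m - 1 - t) = q ^ (m - t)" by (simp only: mt power_Suc)
        finally have le: "(q - s) * q ^ (m - 1 - t) \<le> q ^ (m - t)" .
        show ?thesis unfolding dig_def using N2[of q t m j s] q2 tm' le by auto
      qed
      finally show "f0 (?lp j) \<noteq> 0 \<longleftrightarrow> j < (q - s) * q ^ (m - 1 - t)" .
    qed
    moreover have "(q - s) * q ^ (m - 1 - t) \<le> q ^ m"
    proof -
      have "(q - s) * q ^ (m - 1 - t) \<le> q * q ^ (m - 1 - t)" by (rule mult_right_mono) simp_all
      also have "\<dots> = q ^ Suc (m - 1 - t)" by (simp only: power_Suc)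
      also have "\<dots> \<le> q ^ m" using q2 tm' by (intro power_increasing) auto
      finally show ?thesis .
    qed
    ultimately show ?thesis using Deq by simp
  qed
  have "\<forall>j. c j \<noteq> 0 \<longleftrightarrow> j < D q r m"
  proof
    fix j show "c j \<noteq> 0 \<longleftrightarrow> j < D q r m"
      using Dn by (cases "j < q ^ m") (auto simp: c_def cw_def q_def)
  qed
  thus ?thesis using cRM by (auto simp: q_def)
qed

end

lemma cond_conv:
  fixes q r m b :: nat
  assumes q: "2 \<le> q" and r: "r \<le> m * (q - 1)"
  shows "(real b \<ge> real (q ^ m) - real (q - r mod (q - 1)) * real q powi (int m - int (r div (q - 1)) - 1) + 1)
         \<longleftrightarrow> q ^ m + 1 \<le> b + D q r m"
proof -
  define t where "t = r div (q - 1)"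
  define s where "s = r mod (q - 1)"
  have rts: "r = t * (q - 1) + s" "s < q - 1"
    using div_mult_mod_eq[of r "q - 1"] q by (simp_all add: t_def s_def)
  have tm: "t \<le> m"
  proof (rule ccontr)
    assume "\<not> t \<le> m" hence "Suc m \<le> t" by simp
    hence "Suc m * (q - 1) \<le> t * (q - 1)" by (rule mult_right_mono) simp
    thus False using r rts q by simp
  qed
  define X where "X = real (q - r mod (q - 1)) * real q powi (int m - int (r div (q - 1)) - 1)"
  have Xts: "X = real (q - s) * real q powi (int m - int t - 1)"
    unfolding X_def t_def s_def by (rule refl)
  have XD: "X = real (D q r m)"
  proof (cases "t = m")
    case True
    hence s0: "s = 0" using r rts by simp
    have D1: "D q r m = 1" using True rts s0 by (simp add: D_def)
    have "int m - int t - 1 = - 1" using True by simp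
    hence "real q powi (int m - int t - 1) = inverse (real q)" by (simp add: power_int_minus)
    hence h1: "real (q - s) * real q powi (int m - int t - 1) = 1" using s0 q by simp
    show ?thesis by (simp only: Xts h1 D1 of_nat_1)
  next
    case False
    hence tm': "t < m" using tm by simp
    have Deq: "D q r m = (q - s) * q ^ (m - t - 1)" by (rule D_split[OF q rts tm'])
    have "int m - int t - 1 = int (m - t - 1)" using tm' by simp
    hence "real q powi (int m - int t - 1) = real q powi (int (m - t - 1))" by (simp only:)
    hence "real q powi (int m - int t - 1) = real q ^ (m - t - 1)" by (simp only: power_int_of_nat)
    hence h1: "real (q - s) * real q powi (int m - int t - 1) = real (D q r m)" using Deq by simp
    show ?thesis by (simp only: Xts h1)
  qed
  show ?thesis unfolding X_def[symmetric] XD by linarith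
qed

theorem mainTheorem10:
  fixes alpha :: "nat \<Rightarrow> 'a::{field,finite}" and r m b :: nat
  defines "q \<equiv> CARD('a)"
  defines "t \<equiv> r div (q - 1)"
  defines "s \<equiv> r mod (q - 1)"
  assumes enum: "bij_betw alpha {..<q} (UNIV :: 'a set)" and alpha0: "alpha 0 = 0"
    and m: "1 \<le> m" and r: "r \<le> m * (q - 1)"
    and b: "1 \<le> b" "b \<le> q ^ m"
  shows "b_symbol_MDS b (q ^ m) (RM alpha r m) \<longleftrightarrow>
           (real b \<ge> real (q ^ m) - real (q - s) * real q powi (int m - int t - 1) + 1
            \<or> b_symbol_MDS 1 (q ^ m) (RM alpha r m))"
proof -
  have q2: "2 \<le> q" unfolding q_def by (rule card_ge2)
  define n where "n = q ^ m"
  define C where "C = RM alpha r m"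
  define k where "k = code_dim C"
  define d where "d = D q r m"
  have enum': "bij_betw alpha {..<CARD('a)} (UNIV :: 'a set)" using enum by (simp add: q_def)
  have n1: "1 \<le> n" using q2 by (simp add: n_def)
  have zout: "\<And>c j. c \<in> C \<Longrightarrow> n \<le> j \<Longrightarrow> c j = 0"
    by (auto simp: C_def RM_iff cw_def n_def q_def)
  have Fmin: "d \<le> card {j. j < n \<and> c j \<noteq> 0}" if c: "c \<in> C" "\<exists>i<n. c i \<noteq> 0" for c
  proof -
    obtain f where f: "inP m r f" "c = cw alpha m f" using c(1) by (auto simp: C_def RM_iff)
    obtain i where i: "i < n" "c i \<noteq> 0" using c(2) by auto
    have "f (lex_point alpha q m i) \<noteq> 0" using i f by (auto simp: cw_def n_def q_def)
    hence "D q r m \<le> wt m f" using wt_bound[OF f(1) lp_pts[OF enum' alpha0]] by (simp add: q_def)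
    also have "wt m f = card {j. j < n \<and> c j \<noteq> 0}"
      using cw_weight[OF enum' alpha0, of m f] f by (simp add: n_def q_def)
    finally show ?thesis by (simp add: d_def)
  qed
  obtain c0 where c0: "c0 \<in> C" "\<And>j. c0 j \<noteq> 0 \<longleftrightarrow> j < d"
    using c0_exists[OF enum' alpha0, of r m] r by (auto simp: C_def d_def q_def)
  have d1: "1 \<le> d" using D_ge1[OF q2] by (simp add: d_def)
  have dn: "d \<le> n"
  proof (rule ccontr)
    assume "\<not> d \<le> n" hence "c0 n \<noteq> 0" using c0(2) by simp
    thus False using zout[OF c0(1)] by simp
  qed
  have "c0 0 \<noteq> 0" using c0(2)[of 0] d1 by simp
  hence c0nz: "\<exists>i<n. c0 i \<noteq> 0" using n1 by (intro exI[of _ 0]) simp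
  have c0w: "card {j. j < n \<and> c0 j \<noteq> 0} = d"
  proof -
    have "j < n \<and> c0 j \<noteq> 0 \<longleftrightarrow> j < d" for j
    proof -
      have e: "c0 j \<noteq> 0 \<longleftrightarrow> j < d" by (rule c0(2))
      show ?thesis unfolding e using dn by linarith
    qed
    hence "{j. j < n \<and> c0 j \<noteq> 0} = {..<d}" by blast
    thus ?thesis by simp
  qed
  have Fsing: "\<exists>c\<in>C. (\<exists>i<n. c i \<noteq> 0) \<and> (\<forall>i\<in>S. c i = 0)" if S: "S \<subseteq> {..<n}" "card S < k" for S
  proof (rule ccontr)
    assume H: "\<not> ?thesis"
    have "fs.dim C \<le> card S"
    proof (rule dim_le_restr)
      show "fs.subspace C" unfolding C_def by (rule RM_subspace)
      show "finite S" using S(1) finite_subset by blast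
      fix c assume c: "c \<in> C" "\<forall>i\<in>S. c i = 0"
      hence "\<not> (\<exists>i<n. c i \<noteq> 0)" using H by blast
      thus "c = 0" using zout[OF c(1)] by (auto simp: fun_eq_iff) (metis not_le)
    qed
    thus False using S(2) by (simp add: k_def code_dim_alt)
  qed
  have kn: "k \<le> n"
  proof (rule ccontr)
    assume "\<not> k \<le> n"
    then obtain c where "c \<in> C" "\<exists>i<n. c i \<noteq> 0" "\<forall>i\<in>{..<n}. c i = 0"
      using Fsing[of "{..<n}"] by auto
    thus False by auto
  qed
  define W where "W = (\<lambda>b'. {w_b b' n c | c. c \<in> C \<and> (\<exists>i<n. c i \<noteq> 0)})"
  have Wfin: "finite (W b')" for b'
  proof -
    have "W b' \<subseteq> {..n}" using w_b_le by (auto simp: W_def)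
    thus ?thesis using finite_subset by blast
  qed
  have Wne: "W b' \<noteq> {}" for b' using c0 c0nz by (auto simp: W_def)
  have dbW: "d_b b' n C = Min (W b')" for b' by (simp add: d_b_def W_def)
  have db_le: "d_b b' n C \<le> w_b b' n c" if "c \<in> C" "\<exists>i<n. c i \<noteq> 0" for b' c
    unfolding dbW by (rule Min_le[OF Wfin]) (use that in \<open>auto simp: W_def\<close>)
  have db_ge: "x \<le> d_b b' n C" if "\<And>c. c \<in> C \<Longrightarrow> \<exists>i<n. c i \<noteq> 0 \<Longrightarrow> x \<le> w_b b' n c" for b' x
    unfolding dbW Min_ge_iff[OF Wfin Wne] using that by (auto simp: W_def)
  have db_n: "d_b b' n C \<le> n" for b' using db_le[OF c0(1) c0nz] w_b_le order_trans by blast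
  have w1: "w_b 1 n c = card {j. j < n \<and> c j \<noteq> 0}" for c :: "nat \<Rightarrow> 'a"
    unfolding w_b_def chi_1 ..
  have dd1: "d_b 1 n C = d"
  proof (rule antisym)
    show "d_b 1 n C \<le> d" using db_le[OF c0(1) c0nz, of 1] w1 c0w by simp
    show "d \<le> d_b 1 n C"
    proof (rule db_ge)
      fix c assume "c \<in> C" "\<exists>i<n. c i \<noteq> 0"
      thus "d \<le> w_b 1 n c" unfolding w1 by (rule Fmin)
    qed
  qed
  have low: "min (d + b' - 1) n \<le> w_b b' n c" if "c \<in> C" "\<exists>i<n. c i \<noteq> 0" "1 \<le> b'" for b' c
  proof -
    have "min (card {i. i < n \<and> c i \<noteq> 0} + b' - 1) n \<le> w_b b' n c"
      by (rule w_b_lower) (use that in auto)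
    moreover have "d \<le> card {i. i < n \<and> c i \<noteq> 0}" using Fmin that by simp
    ultimately show ?thesis by linarith
  qed
  have prefix: "\<exists>c\<in>C. (\<exists>i<n. c i \<noteq> 0) \<and> w_b b' n c \<le> n - k + b'" if "1 \<le> b'" "b' \<le> k" for b'
  proof -
    have s1: "{..<k - 1} \<subseteq> {..<n}" using kn by auto
    have s2: "card {..<k - 1} < k" using that by simp
    obtain c where c: "c \<in> C" "\<exists>i<n. c i \<noteq> 0" "\<forall>i\<in>{..<k - 1}. c i = 0"
      using Fsing[OF s1 s2] by blast
    have "w_b b' n c \<le> n - (Suc (k - 1) - b')"
      by (rule w_b_prefix_zero) (use c that kn in auto)
    thus ?thesis using c that kn by auto
  qed
  have Sing: "d + k \<le> n + 1"
  proof (cases "k = 0")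
    case True thus ?thesis using dn by simp
  next
    case False
    then obtain c where c: "c \<in> C" "\<exists>i<n. c i \<noteq> 0" "w_b 1 n c \<le> n - k + 1"
      using prefix[of 1] by auto
    have "d \<le> card {j. j < n \<and> c j \<noteq> 0}" using Fmin c by simp
    thus ?thesis using c(3) w1 kn by simp
  qed
  have cond: "(real b \<ge> real (q ^ m) - real (q - s) * real q powi (int m - int t - 1) + 1)
              \<longleftrightarrow> n + 1 \<le> b + d"
    unfolding s_def t_def n_def d_def by (rule cond_conv[OF q2 r])
  have MDSb: "b_symbol_MDS b' (q ^ m) (RM alpha r m) \<longleftrightarrow> d_b b' n C = min (n - k + b') n" for b'
    by (simp add: b_symbol_MDS_def n_def C_def k_def)
  show ?thesis unfolding cond MDSb
  proof
    assume MD: "d_b b n C = min (n - k + b) n"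
    show "n + 1 \<le> b + d \<or> d_b 1 n C = min (n - k + 1) n"
    proof (cases "n + 1 \<le> b + d")
      case True thus ?thesis by simp
    next
      case False
      hence na: "\<not> n + 1 \<le> b + d" .
      have "d_b b n C \<le> d + (b - 1)"
        using db_le[OF c0(1) c0nz, of b] w_b_interval[OF c0(2) b(1), of n] by simp
      hence lt: "d_b b n C < n" using na b(1) by linarith
      hence "n - k + b < n" using MD by simp
      hence "b < k" "d_b b n C = n - k + b" using MD kn by auto
      hence "n - k + 1 \<le> d" using \<open>d_b b n C \<le> d + (b - 1)\<close> b(1) kn by linarith
      hence "d = n - k + 1" using Sing kn by linarith
      hence "d_b 1 n C = min (n - k + 1) n" using dd1 \<open>b < k\<close> kn b(1) by simp
      thus ?thesis by simp
    qed
  next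
    assume "n + 1 \<le> b + d \<or> d_b 1 n C = min (n - k + 1) n"
    thus "d_b b n C = min (n - k + b) n"
    proof
      assume a: "n + 1 \<le> b + d"
      have "n \<le> d_b b n C"
      proof (rule db_ge)
        fix c assume "c \<in> C" "\<exists>i<n. c i \<noteq> 0"
        from low[OF this b(1)] show "n \<le> w_b b n c" using a by linarith
      qed
      moreover have "k \<le> b" using a Sing by linarith
      ultimately show ?thesis using db_n[of b] by simp
    next
      assume a: "d_b 1 n C = min (n - k + 1) n"
      hence dk: "d = min (n - k + 1) n" using dd1 by simp
      have ge: "min (n - k + b) n \<le> d_b b n C"
      proof (rule db_ge)
        fix c assume "c \<in> C" "\<exists>i<n. c i \<noteq> 0"
        from low[OF this b(1)] show "min (n - k + b) n \<le> w_b b n c" using dk kn b(1) by linarith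
      qed
      have le: "d_b b n C \<le> min (n - k + b) n"
      proof (cases "b \<le> k")
        case True
        then obtain c where "c \<in> C" "\<exists>i<n. c i \<noteq> 0" "w_b b n c \<le> n - k + b"
          using prefix[OF b(1)] by auto
        hence "d_b b n C \<le> n - k + b" using db_le order_trans by blast
        thus ?thesis using db_n[of b] by simp
      next
        case False thus ?thesis using db_n[of b] by simp
      qed
      show ?thesis using ge le by simp
    qed
  qed
qed

end
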